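(* Assume $\delta_1:=\alpha_1-\alpha_2-\gamma_2>0$, $\delta_2:=\alpha_1-\alpha_3+\eta_1>0$ and $\frac{\mu_4'-\mu_0}{\alpha_1}<\frac12\sigma_1$. For $K>K^*:=\frac{b\sigma_1}{b-\mu_0}$ let $G_3(K)=(S^*,I_1^*,0,0,R^* )$ be the unique equilibrium of the system below with positive $S^*,I_1^*,R^*$, and define $$P_1(K)=\delta_1I_1^*+\alpha_2(\sigma_1-\sigma_2),\quad Q_1(K)=\delta_2I_1^*+\alpha_3(\sigma_1-\sigma_3),\quad U_1(K)=\beta_2(\gamma_1+\gamma_2)S^*I_1^*,$$ $\Delta_1(K)=P_1(K)Q_1(K)-U_1(K)$. Then $P_1$ and $Q_1$ are strictly increasing in $K$, $U_1$ is strictly increasing in $K$, and on every interval $J\subset(K^*,\infty)$ on which $P_1<0$ and $Q_1<0$, the function $\Delta_1$ is strictly decreasing. Moreover $\Delta_1(K)\to\alpha_2\alpha_3(\sigma_2-\sigma_1)(\sigma_3-\sigma_1)>0$ as $K\downarrow K^*$.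
   Context: Consider, for $t\ge0$, the system $S'=\big(b(1-\tfrac{N}{K})-\alpha_1I_1-\alpha_2I_2-(\beta_1+\beta_2+\alpha_3)I_{12}-\mu_0\big)S$, $I_1'=\big(b(1-\tfrac{N}{K})+\alpha_1S-\eta_1I_{12}-\gamma_1I_2-\mu_1\big)I_1+\beta_1SI_{12}$, $I_2'=\big(b(1-\tfrac{N}{K})+\alpha_2S-\eta_2I_{12}-\gamma_2I_1-\mu_2\big)I_2+\beta_2SI_{12}$, $I_{12}'=\big(b(1-\tfrac{N}{K})+\alpha_3S+\eta_1I_1+\eta_2I_2-\mu_3\big)I_{12}+(\gamma_1+\gamma_2)I_1I_2$, $R'=\big(b(1-\tfrac{N}{K})-\mu_4'\big)R+\rho_1I_1+\rho_2I_2+\rho_3I_{12}$, where $N=S+I_1+I_2+I_{12}+R$. All parameters $b,K,\alpha_i,\beta_i,\gamma_i,\eta_i,\rho_i,\mu_0,\mu_i'$ are positive and $\mu_i=\rho_i+\mu_i'$ for $i=1,2,3$; $K$ is regarded as a varying parameter, the others fixed. Standing assumptions: $b>\mu_0$, $b>\mu_i$ ($i=1,2,3$), $b>\mu_4'$, and $\mu_0<\mu_4'<\mu_j'$ for $j=1,2,3$. Set $\sigma_k=(\mu_k-\mu_0)/\alpha_k$ ($k=1,2,3$), assumed to satisfy $\sigma_1<\sigma_2<\sigma_3$, and $S^{**}=\frac{K}{b}(b-\mu_0)$. *)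

theory Defs
  imports "HOL-Analysis.Analysis"
begin

text \<open>Fixed (non-K) parameters of the model. The paper's mu_i' (i=1..4) are
 mup1..mup4, and mu_i = rho_i + mu_i' for i = 1,2,3.\<close>
record params =
  pb :: real
  al1 :: real  al2 :: real  al3 :: real
  be1 :: real  be2 :: real
  ga1 :: real  ga2 :: real
  et1 :: real  et2 :: real
  rh1 :: real  rh2 :: real  rh3 :: real
  mu0 :: real
  mup1 :: real  mup2 :: real  mup3 :: real  mup4 :: real

definition mu1 :: "params \<Rightarrow> real" where "mu1 p = rh1 p + mup1 p"
definition mu2 :: "params \<Rightarrow> real" where "mu2 p = rh2 p + mup2 p"
definition mu3 :: "params \<Rightarrow> real" where "mu3 p = rh3 p + mup3 p"

definition sig1 :: "params \<Rightarrow> real" where "sig1 p = (mu1 p - mu0 p) / al1 p"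
definition sig2 :: "params \<Rightarrow> real" where "sig2 p = (mu2 p - mu0 p) / al2 p"
definition sig3 :: "params \<Rightarrow> real" where "sig3 p = (mu3 p - mu0 p) / al3 p"

definition rhs :: "params \<Rightarrow> real \<Rightarrow> real \<times> real \<times> real \<times> real \<times> real
                   \<Rightarrow> real \<times> real \<times> real \<times> real \<times> real" where
  "rhs p K x = (case x of (S, I1, I2, I12, R) \<Rightarrow>
     (let N = S + I1 + I2 + I12 + R; g = pb p * (1 - N / K) in
      ((g - al1 p * I1 - al2 p * I2 - (be1 p + be2 p + al3 p) * I12 - mu0 p) * S,
       (g + al1 p * S - et1 p * I12 - ga1 p * I2 - mu1 p) * I1 + be1 p * S * I12,
       (g + al2 p * S - et2 p * I12 - ga2 p * I1 - mu2 p) * I2 + be2 p * S * I12,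
       (g + al3 p * S + et1 p * I1 + et2 p * I2 - mu3 p) * I12 + (ga1 p + ga2 p) * I1 * I2,
       (g - mup4 p) * R + rh1 p * I1 + rh2 p * I2 + rh3 p * I12)))"

definition is_equilibrium :: "params \<Rightarrow> real \<Rightarrow> real \<times> real \<times> real \<times> real \<times> real \<Rightarrow> bool" where
  "is_equilibrium p K x \<longleftrightarrow> rhs p K x = (0, 0, 0, 0, 0)"

definition Kstar :: "params \<Rightarrow> real" where
  "Kstar p = pb p * sig1 p / (pb p - mu0 p)"

definition G3 :: "params \<Rightarrow> real \<Rightarrow> real \<times> real \<times> real" where
  "G3 p K = (THE (S, I1, R). S > 0 \<and> I1 > 0 \<and> R > 0 \<and> is_equilibrium p K (S, I1, 0, 0, R))"

definition Sst :: "params \<Rightarrow> real \<Rightarrow> real" where "Sst p K = fst (G3 p K)"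
definition I1st :: "params \<Rightarrow> real \<Rightarrow> real" where "I1st p K = fst (snd (G3 p K))"

definition P1 :: "params \<Rightarrow> real \<Rightarrow> real" where
  "P1 p K = (al1 p - al2 p - ga2 p) * I1st p K + al2 p * (sig1 p - sig2 p)"
definition Q1 :: "params \<Rightarrow> real \<Rightarrow> real" where
  "Q1 p K = (al1 p - al3 p + et1 p) * I1st p K + al3 p * (sig1 p - sig3 p)"
definition U1 :: "params \<Rightarrow> real \<Rightarrow> real" where
  "U1 p K = be2 p * (ga1 p + ga2 p) * Sst p K * I1st p K"
definition Delta1 :: "params \<Rightarrow> real \<Rightarrow> real" where
  "Delta1 p K = P1 p K * Q1 p K - U1 p K"

end

theory Submission
  imports Defs
begin

lemma eq_unfold:
  "is_equilibrium p K (S, I, 0, 0, R) \<longleftrightarrow>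
    ((pb p*(1 - (S+I+R)/K) - al1 p*I - mu0 p)*S = 0 \<and>
     (pb p*(1 - (S+I+R)/K) + al1 p*S - mu1 p)*I = 0 \<and>
     (pb p*(1 - (S+I+R)/K) - mup4 p)*R + rh1 p*I = 0)"
  by (simp add: is_equilibrium_def rhs_def Let_def)

context
  fixes p :: params
  assumes a1: "al1 p > 0" and r1: "rh1 p > 0" and b0: "pb p > mu0 p" and bp: "pb p > 0"
    and m4: "mu0 p < mup4 p" "mup4 p < mup1 p" and b4: "pb p > mup4 p"
    and small: "(mup4 p - mu0 p) / al1 p < sig1 p / 2"
begin

lemma sig1_pos: "sig1 p > 0"
  using a1 m4 r1 by (simp add: sig1_def mu1_def)

lemma Kstar_pos: "Kstar p > 0"
  using sig1_pos b0 bp by (simp add: Kstar_def)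

lemma sol_props:
  assumes K: "K > 0" and S: "S > 0" and I: "I > 0" and R: "R > 0"
    and eq: "is_equilibrium p K (S, I, 0, 0, R)"
  shows "S + I = sig1 p" "pb p*(1 - (S+I+R)/K) = mu0 p + al1 p * I"
    "R = rh1 p * I / (mup4 p - mu0 p - al1 p * I)" "al1 p * I < mup4 p - mu0 p"
proof -
  define g where "g = pb p*(1 - (S+I+R)/K)"
  from eq have e1: "(g - al1 p*I - mu0 p)*S = 0" and e2: "(g + al1 p*S - mu1 p)*I = 0"
    and e3: "(g - mup4 p)*R + rh1 p*I = 0" by (simp_all add: eq_unfold g_def)
  from e1 S have g1: "g = al1 p*I + mu0 p" by simp
  from e2 I have g2: "g + al1 p*S = mu1 p" by simp
  have "al1 p * (S + I) = mu1 p - mu0 p" using g1 g2 by (simp add: algebra_simps)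
  then show "S + I = sig1 p" using a1 by (simp add: sig1_def field_simps)
  show "pb p*(1 - (S+I+R)/K) = mu0 p + al1 p * I" using g1 g_def by simp
  have "g < mup4 p"
  proof (rule ccontr)
    assume "\<not> g < mup4 p"
    then have "(g - mup4 p)*R \<ge> 0" using R by simp
    moreover have "rh1 p * I > 0" using r1 I by simp
    ultimately show False using e3 by linarith
  qed
  then show lt: "al1 p * I < mup4 p - mu0 p" using g1 by simp
  have "R * (mup4 p - g) = rh1 p * I" using e3 by (simp add: algebra_simps)
  then show "R = rh1 p * I / (mup4 p - mu0 p - al1 p * I)" using lt g1
    by (simp add: field_simps)
qed

lemma sol_less_false:
  assumes K: "K > 0" and S: "S > 0" and I: "I > 0" and R: "R > 0"
    and eq: "is_equilibrium p K (S, I, 0, 0, R)"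
    and S': "S' > 0" and I': "I' > 0" and R': "R' > 0"
    and eq': "is_equilibrium p K (S', I', 0, 0, R')"
    and lt: "I < I'"
  shows False
proof -
  note A = sol_props[OF K S I R eq] and B = sol_props[OF K S' I' R' eq']
  have "pb p*(1 - (S+I+R)/K) < pb p*(1 - (S'+I'+R')/K)" using A(2) B(2) lt a1 by simp
  then have "(S'+I'+R')/K < (S+I+R)/K" using bp by simp
  then have "S'+I'+R' < S+I+R" using K by (meson divide_right_mono not_le less_imp_le)
  then have "R' < R" using A(1) B(1) by linarith
  moreover have "R < R'"
  proof -
    have d: "0 < mup4 p - mu0 p - al1 p * I'" using B(4) by simp
    have "mup4 p - mu0 p - al1 p * I' < mup4 p - mu0 p - al1 p * I" using a1 lt by simp
    then have "rh1 p * I / (mup4 p - mu0 p - al1 p * I) < rh1 p * I' / (mup4 p - mu0 p - al1 p * I')"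
      using d r1 I lt by (intro frac_less) auto
    then show ?thesis using A(3) B(3) by simp
  qed
  ultimately show False by simp
qed

lemma sol_mono:
  assumes K: "K > 0" and KK: "K < K'" and S: "S > 0" and I: "I > 0" and R: "R > 0"
    and eq: "is_equilibrium p K (S, I, 0, 0, R)"
    and S': "S' > 0" and I': "I' > 0" and R': "R' > 0"
    and eq': "is_equilibrium p K' (S', I', 0, 0, R')"
  shows "I < I'"
proof (rule ccontr)
  assume "\<not> I < I'"
  then have le: "I' \<le> I" by simp
  have K': "K' > 0" using K KK by simp
  note A = sol_props[OF K S I R eq] and B = sol_props[OF K' S' I' R' eq']
  have "R' \<le> R"
  proof -
    have d: "0 < mup4 p - mu0 p - al1 p * I" using A(4) by simp
    have "mup4 p - mu0 p - al1 p * I \<le> mup4 p - mu0 p - al1 p * I'" using a1 le by simp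
    then have "rh1 p * I' / (mup4 p - mu0 p - al1 p * I') \<le> rh1 p * I / (mup4 p - mu0 p - al1 p * I)"
      using d r1 I' le by (intro frac_le) auto
    then show ?thesis using A(3) B(3) by simp
  qed
  then have N: "S'+I'+R' \<le> S+I+R" using A(1) B(1) by linarith
  have Np: "S+I+R > 0" using S I R by simp
  have "(S'+I'+R')/K' \<le> (S+I+R)/K'" using N K' by (simp add: divide_right_mono)
  also have "\<dots> < (S+I+R)/K" using Np K KK by (simp add: frac_less2)
  finally have "pb p*(1 - (S+I+R)/K) < pb p*(1 - (S'+I'+R')/K')" using bp by simp
  then have "al1 p * I < al1 p * I'" using A(2) B(2) by simp
  then show False using le a1 by simp
qed

lemma sol_exists:
  assumes K: "K > Kstar p"
  shows "\<exists>S I R. S > 0 \<and> I > 0 \<and> R > 0 \<and> is_equilibrium p K (S, I, 0, 0, R)"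
proof -
  define c' where "c' = mup4 p - mu0 p"
  have c'p: "c' > 0" using m4 by (simp add: c'_def)
  define c where "c = c' / al1 p"
  have cp: "c > 0" using c'p a1 by (simp add: c_def)
  have cc: "al1 p * c = c'" using a1 by (simp add: c_def)
  define h where "h = (\<lambda>x. pb p*(sig1 p*(c' - al1 p*x) + rh1 p*x) - K*(pb p - mu0 p - al1 p*x)*(c' - al1 p*x))"
  have Kb: "K*(pb p - mu0 p) > pb p * sig1 p"
    using K b0 by (simp add: Kstar_def field_simps)
  have h0: "h 0 < 0"
  proof -
    have "h 0 = c' * (pb p * sig1 p - K*(pb p - mu0 p))" by (simp add: h_def algebra_simps)
    then show ?thesis using Kb c'p by (simp add: mult_pos_neg)
  qed
  have hc: "h c > 0" using cc bp r1 cp by (simp add: h_def)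
  have "continuous_on {0..c} h" unfolding h_def by (intro continuous_intros)
  then obtain x where x: "0 \<le> x" "x \<le> c" "h x = 0"
    using IVT'[of h 0 0 c] h0 hc cp by auto
  have x0: "x > 0" using x h0 by (cases "x = 0") auto
  have xc: "x < c" using x hc by (cases "x = c") auto
  have dpos: "c' - al1 p * x > 0" using xc a1 cc
    by (metis diff_gt_0_iff_gt mult_strict_left_mono)
  define S where "S = sig1 p - x"
  define R where "R = rh1 p * x / (c' - al1 p * x)"
  have Kp: "K > 0" using K Kstar_pos by simp
  have q1: "(sig1 p + R) * (c' - al1 p * x) = sig1 p*(c' - al1 p*x) + rh1 p*x"
    using dpos by (simp add: R_def field_simps)
  have q2: "pb p*(sig1 p*(c' - al1 p*x) + rh1 p*x) = K*(pb p - mu0 p - al1 p*x)*(c' - al1 p*x)"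
    using x(3) by (simp add: h_def)
  have "pb p * (sig1 p + R) * (c' - al1 p * x) = K*(pb p - mu0 p - al1 p*x)*(c' - al1 p*x)"
    using q1 q2 by (metis mult.assoc)
  then have "pb p * (sig1 p + R) = K*(pb p - mu0 p - al1 p*x)" using dpos by simp
  then have g: "pb p*(1 - (S+x+R)/K) = mu0 p + al1 p * x"
    using Kp by (simp add: S_def field_simps)
  have Rp: "R > 0" using r1 x0 dpos by (simp add: R_def)
  have "x < sig1 p" using xc small sig1_pos unfolding c_def c'_def by linarith
  then have Sp: "S > 0" by (simp add: S_def)
  have e2: "mu0 p + al1 p * x + al1 p * S - mu1 p = 0"
    using a1 by (simp add: S_def sig1_def field_simps)
  have e3: "(mu0 p + al1 p * x - mup4 p) * R + rh1 p * x = 0"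
    using dpos by (simp add: R_def c'_def field_simps)
  have "is_equilibrium p K (S, x, 0, 0, R)"
    unfolding eq_unfold g using e2 e3 by simp
  then show ?thesis using Sp x0 Rp by blast
qed

lemma G3_props:
  assumes K: "K > Kstar p"
  shows "Sst p K > 0 \<and> I1st p K > 0 \<and> snd (snd (G3 p K)) > 0
     \<and> is_equilibrium p K (Sst p K, I1st p K, 0, 0, snd (snd (G3 p K)))"
proof -
  define P where "P = (\<lambda>(S, I1, R). S > 0 \<and> I1 > 0 \<and> R > 0 \<and> is_equilibrium p K (S, I1, 0, 0, R))"
  have Kp: "K > 0" using K Kstar_pos by simp
  obtain S I R where sol: "S > 0" "I > 0" "R > 0" "is_equilibrium p K (S, I, 0, 0, R)"
    using sol_exists[OF K] by blast
  have "\<exists>!t. P t"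
  proof (rule ex1I[of _ "(S,I,R)"])
    show "P (S,I,R)" using sol by (simp add: P_def)
    fix t assume Pt: "P t"
    obtain S' I' R' where t: "t = (S',I',R')" by (cases t)
    have sol': "S' > 0" "I' > 0" "R' > 0" "is_equilibrium p K (S', I', 0, 0, R')"
      using Pt by (simp_all add: t P_def)
    have "I' = I"
    proof (rule ccontr)
      assume "I' \<noteq> I"
      then consider "I' < I" | "I < I'" by linarith
      then show False
      proof cases
        case 1 then show ?thesis using sol_less_false[OF Kp sol' sol] by simp
      next
        case 2 then show ?thesis using sol_less_false[OF Kp sol sol'] by simp
      qed
    qed
    moreover have "S' = S" using sol_props(1)[OF Kp sol] sol_props(1)[OF Kp sol'] \<open>I' = I\<close> by simp
    moreover have "R' = R" using sol_props(3)[OF Kp sol] sol_props(3)[OF Kp sol'] \<open>I' = I\<close> by simp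
    ultimately show "t = (S,I,R)" using t by simp
  qed
  then have "P (THE t. P t)" by (rule theI')
  moreover have "G3 p K = (THE t. P t)" by (simp add: G3_def P_def)
  ultimately have "P (G3 p K)" by simp
  then show ?thesis by (cases "G3 p K") (simp add: P_def Sst_def I1st_def)
qed

lemma I1_facts:
  assumes K: "K > Kstar p"
  shows "I1st p K > 0 \<and> Sst p K = sig1 p - I1st p K \<and> I1st p K < sig1 p / 2
     \<and> al1 p * I1st p K \<le> pb p - mu0 p - pb p * sig1 p / K"
proof -
  have Kp: "K > 0" using K Kstar_pos by simp
  have G: "Sst p K > 0" "I1st p K > 0" "snd (snd (G3 p K)) > 0"
     "is_equilibrium p K (Sst p K, I1st p K, 0, 0, snd (snd (G3 p K)))"
    using G3_props[OF K] by auto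
  note A = sol_props[OF Kp G]
  have "I1st p K < (mup4 p - mu0 p) / al1 p" using A(4) a1 by (simp add: field_simps)
  then have h1: "I1st p K < sig1 p / 2" using small by linarith
  have "sig1 p / K \<le> (Sst p K + I1st p K + snd (snd (G3 p K))) / K"
    using A(1) G(3) Kp by (simp add: divide_right_mono)
  then have "pb p * (1 - (Sst p K + I1st p K + snd (snd (G3 p K))) / K) \<le> pb p * (1 - sig1 p / K)"
    using bp by (simp add: mult_left_mono)
  then have "al1 p * I1st p K \<le> pb p - mu0 p - pb p * sig1 p / K"
    using A(2) by (simp add: algebra_simps)
  then show ?thesis using G(2) h1 A(1) by simp
qed

lemma I1_mono:
  assumes K: "K > Kstar p" and KK: "K < K'"
  shows "I1st p K < I1st p K'"
proof -
  have Kp: "K > 0" using K Kstar_pos by simp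
  have K': "K' > Kstar p" using K KK by simp
  have G: "Sst p K > 0" "I1st p K > 0" "snd (snd (G3 p K)) > 0"
     "is_equilibrium p K (Sst p K, I1st p K, 0, 0, snd (snd (G3 p K)))"
    using G3_props[OF K] by auto
  have G': "Sst p K' > 0" "I1st p K' > 0" "snd (snd (G3 p K')) > 0"
     "is_equilibrium p K' (Sst p K', I1st p K', 0, 0, snd (snd (G3 p K')))"
    using G3_props[OF K'] by auto
  show ?thesis using sol_mono[OF Kp KK G G'] .
qed

end

lemma quad_mono:
  fixes s x y :: real
  assumes "0 < x" "x < y" "y < s/2"
  shows "(s - x) * x < (s - y) * y"
proof -
  have "(y - x) * (s - x - y) > 0" using assms by simp
  then show ?thesis by (simp add: algebra_simps)
qed

theorem mainTheorem12:
  fixes p :: params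
  assumes pos: "pb p > 0" "al1 p > 0" "al2 p > 0" "al3 p > 0" "be1 p > 0" "be2 p > 0"
      "ga1 p > 0" "ga2 p > 0" "et1 p > 0" "et2 p > 0" "rh1 p > 0" "rh2 p > 0" "rh3 p > 0"
      "mu0 p > 0" "mup1 p > 0" "mup2 p > 0" "mup3 p > 0" "mup4 p > 0"
    and b_gt: "pb p > mu0 p" "pb p > mu1 p" "pb p > mu2 p" "pb p > mu3 p" "pb p > mup4 p"
    and mu_ord: "mu0 p < mup4 p" "mup4 p < mup1 p" "mup4 p < mup2 p" "mup4 p < mup3 p"
    and sig_ord: "sig1 p < sig2 p" "sig2 p < sig3 p"
    and delta1: "al1 p - al2 p - ga2 p > 0"
    and delta2: "al1 p - al3 p + et1 p > 0"
    and small: "(mup4 p - mu0 p) / al1 p < sig1 p / 2"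
  shows "strict_mono_on {Kstar p<..} (P1 p)
       \<and> strict_mono_on {Kstar p<..} (Q1 p)
       \<and> strict_mono_on {Kstar p<..} (U1 p)
       \<and> (\<forall>J. is_interval J \<and> J \<subseteq> {Kstar p<..} \<and> (\<forall>K\<in>J. P1 p K < 0 \<and> Q1 p K < 0)
              \<longrightarrow> (\<forall>K\<in>J. \<forall>K'\<in>J. K < K' \<longrightarrow> Delta1 p K' < Delta1 p K))
       \<and> (Delta1 p \<longlongrightarrow> al2 p * al3 p * (sig2 p - sig1 p) * (sig3 p - sig1 p)) (at_right (Kstar p))
       \<and> al2 p * al3 p * (sig2 p - sig1 p) * (sig3 p - sig1 p) > 0"
proof -
  note ctx = pos(2) pos(11) b_gt(1) pos(1) mu_ord(1) mu_ord(2) b_gt(5) small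
  have X: "\<And>K. K > Kstar p \<Longrightarrow> I1st p K > 0 \<and> Sst p K = sig1 p - I1st p K \<and> I1st p K < sig1 p / 2
     \<and> al1 p * I1st p K \<le> pb p - mu0 p - pb p * sig1 p / K"
    using I1_facts[OF ctx] by blast
  have M: "\<And>K K'. Kstar p < K \<Longrightarrow> K < K' \<Longrightarrow> I1st p K < I1st p K'"
    using I1_mono[OF ctx] by blast
  have KsP: "Kstar p > 0" using Kstar_pos[OF ctx] .
  have s1: "sig1 p > 0" using sig1_pos[OF ctx] .
  have PM: "\<And>K K'. Kstar p < K \<Longrightarrow> K < K' \<Longrightarrow> P1 p K < P1 p K'"
    using M delta1 by (simp add: P1_def)
  have QM: "\<And>K K'. Kstar p < K \<Longrightarrow> K < K' \<Longrightarrow> Q1 p K < Q1 p K'"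
    using M delta2 by (simp add: Q1_def)
  have UM: "\<And>K K'. Kstar p < K \<Longrightarrow> K < K' \<Longrightarrow> U1 p K < U1 p K'"
  proof -
    fix K K' assume a: "Kstar p < K" "K < K'"
    have "(sig1 p - I1st p K) * I1st p K < (sig1 p - I1st p K') * I1st p K'"
      using quad_mono[of "I1st p K" "I1st p K'" "sig1 p"] X[of K] X[of K'] M[OF a] a by auto
    moreover have "be2 p * (ga1 p + ga2 p) > 0" using pos by simp
    ultimately have "be2 p * (ga1 p + ga2 p) * ((sig1 p - I1st p K) * I1st p K)
        < be2 p * (ga1 p + ga2 p) * ((sig1 p - I1st p K') * I1st p K')"
      by (simp add: mult_strict_left_mono)
    then show "U1 p K < U1 p K'" using X[of K] X[of K'] a by (simp add: U1_def mult.assoc)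
  qed
  have part1: "strict_mono_on {Kstar p<..} (P1 p)" "strict_mono_on {Kstar p<..} (Q1 p)"
      "strict_mono_on {Kstar p<..} (U1 p)"
    using PM QM UM by (auto simp: strict_mono_on_def)
  have part2: "\<forall>J. is_interval J \<and> J \<subseteq> {Kstar p<..} \<and> (\<forall>K\<in>J. P1 p K < 0 \<and> Q1 p K < 0)
              \<longrightarrow> (\<forall>K\<in>J. \<forall>K'\<in>J. K < K' \<longrightarrow> Delta1 p K' < Delta1 p K)"
  proof (intro allI impI ballI)
    fix J K K' assume H: "is_interval J \<and> J \<subseteq> {Kstar p<..} \<and> (\<forall>K\<in>J. P1 p K < 0 \<and> Q1 p K < 0)"
      and KJ: "K \<in> J" "K' \<in> J" "K < K'"
    have a: "Kstar p < K" using H KJ by auto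
    have n: "P1 p K' < 0" "Q1 p K' < 0" using H KJ by auto
    have "(- P1 p K') * (- Q1 p K') < (- P1 p K) * (- Q1 p K)"
      using PM[OF a KJ(3)] QM[OF a KJ(3)] n by (intro mult_strict_mono) auto
    then show "Delta1 p K' < Delta1 p K" using UM[OF a KJ(3)] by (simp add: Delta1_def)
  qed
  have ev: "\<forall>\<^sub>F K in at_right (Kstar p). Kstar p < K" by (rule eventually_at_right_less)
  have up: "((\<lambda>K. (pb p - mu0 p - pb p * sig1 p / K) / al1 p) \<longlongrightarrow>
       (pb p - mu0 p - pb p * sig1 p / Kstar p) / al1 p) (at_right (Kstar p))"
    using KsP pos(2) by (intro tendsto_intros) auto
  have "pb p - mu0 p - pb p * sig1 p / Kstar p = 0"
    using b_gt(1) s1 pos(1) by (simp add: Kstar_def field_simps)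
  then have up0: "((\<lambda>K. (pb p - mu0 p - pb p * sig1 p / K) / al1 p) \<longlongrightarrow> 0) (at_right (Kstar p))"
    using up by simp
  have I0: "(I1st p \<longlongrightarrow> 0) (at_right (Kstar p))"
  proof (rule tendsto_sandwich[OF _ _ tendsto_const up0])
    show "\<forall>\<^sub>F K in at_right (Kstar p). 0 \<le> I1st p K"
      using ev by eventually_elim (metis X less_imp_le)
    show "\<forall>\<^sub>F K in at_right (Kstar p). I1st p K \<le> (pb p - mu0 p - pb p * sig1 p / K) / al1 p"
      using ev by eventually_elim (metis X pos(2) mult.commute pos_le_divide_eq)
  qed
  define F where "F = (\<lambda>x. ((al1 p - al2 p - ga2 p) * x + al2 p * (sig1 p - sig2 p)) *
      ((al1 p - al3 p + et1 p) * x + al3 p * (sig1 p - sig3 p)) - be2 p * (ga1 p + ga2 p) * (sig1 p - x) * x)"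
  have "((\<lambda>K. F (I1st p K)) \<longlongrightarrow> F 0) (at_right (Kstar p))"
    unfolding F_def by (intro tendsto_intros I0)
  moreover have "F 0 = al2 p * al3 p * (sig2 p - sig1 p) * (sig3 p - sig1 p)"
    by (simp add: F_def algebra_simps)
  moreover have "\<forall>\<^sub>F K in at_right (Kstar p). F (I1st p K) = Delta1 p K"
    proof (rule eventually_mono[OF ev])
    fix K assume "Kstar p < K"
    then show "F (I1st p K) = Delta1 p K" using X[of K] by (simp add: F_def Delta1_def P1_def Q1_def U1_def)
  qed
  ultimately have part3: "(Delta1 p \<longlongrightarrow> al2 p * al3 p * (sig2 p - sig1 p) * (sig3 p - sig1 p)) (at_right (Kstar p))"
    using Lim_transform_eventually by fastforce
  have part4: "al2 p * al3 p * (sig2 p - sig1 p) * (sig3 p - sig1 p) > 0"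
    using pos sig_ord by simp
  show ?thesis using part1 part2 part3 part4 by blast
qed


end
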